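(* Let $\mathcal X$ be a nonsingular plane curve of degree $r+1$ and genus $g$ over $\mathbf F_q$ with at least one $\mathbf F_q$-rational point. Let $N$ be an integer with $-1\le N\le 2g-2$. Let $a=\alpha r+\beta$, with $0\le\beta<r$ and $\alpha\ge1$, be a gap of $\mathcal X$ such that $a\le N/2$. Then $$\tilde\ell(a)+\tilde\ell(N-a)\le\tilde\ell(a-r)+\tilde\ell(N-(a-r)).$$
   Context: $\ell(A)=\dim_{\mathbf F_q}\mathcal L(A)$. For $i\ge1$, $\gamma_i=\min\{\deg A: A\ \mathbf F_q\text{-rational divisor},\ \ell(A)\ge i\}$, and $GS(\mathcal X)=\{\gamma_i:i\ge1\}$. For such a plane curve it is known that $GS(\mathcal X)$ is the numerical semigroup generated by $r$ and $r+1$, and that $g=r(r-1)/2$. Let $\mathbf N'=\{-1,0,1,\dots\}$; a gap of $\mathcal X$ is an element of $\mathbf N'\setminus GS(\mathcal X)$. Define $\tilde\ell(-1)=0$ and $\tilde\ell(b)=\max\{i\ge1:\gamma_i\le b\}$ for integers $b\ge0$. *)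

theory Defs
  imports Main "HOL-Library.Infinite_Set"
begin

text \<open>Weierstrass semigroup GS(X) of a nonsingular plane curve of degree r+1:
  the numerical semigroup generated by r and r+1 (as stated in the context).\<close>
definition GS :: "nat \<Rightarrow> nat set" where
  "GS r = {i * r + j * (r + 1) | i j. True}"

text \<open>gamma_i (i \<ge> 1): the i-th smallest element of GS, so gamma_1 = 0.\<close>
definition gamma :: "nat \<Rightarrow> nat \<Rightarrow> int" where
  "gamma r i = int (enumerate (GS r) (i - 1))"

definition is_gap :: "nat \<Rightarrow> int \<Rightarrow> bool" where
  "is_gap r b \<longleftrightarrow> -1 \<le> b \<and> b \<notin> int ` GS r"

definition ell_tilde :: "nat \<Rightarrow> int \<Rightarrow> nat" where
  "ell_tilde r b = (if b < 0 then 0 else Max {i. 1 \<le> i \<and> gamma r i \<le> b})"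

end

theory Submission
  imports Defs
begin

lemma enum_count:
  fixes S :: "nat set" and B :: nat
  assumes inf: "infinite S" and z: "0 \<in> S"
  shows "Max {i. 1 \<le> i \<and> enumerate S (i - 1) \<le> B} = card {s\<in>S. s \<le> B}"
proof -
  define D where "D = {n. enumerate S n \<le> B}"
  have fD: "finite D"
  proof (rule finite_subset)
    show "D \<subseteq> {..B}" unfolding D_def using le_enumerate[OF inf] by (auto intro: le_trans)
  qed auto
  have bij: "bij_betw (enumerate S) UNIV S" by (rule bij_enumerate[OF inf])
  have img: "enumerate S ` D = {s\<in>S. s \<le> B}"
  proof
    show "enumerate S ` D \<subseteq> {s \<in> S. s \<le> B}" unfolding D_def using enumerate_in_set[OF inf] by auto
    show "{s \<in> S. s \<le> B} \<subseteq> enumerate S ` D"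
    proof
      fix s assume "s \<in> {s \<in> S. s \<le> B}"
      then obtain n where "enumerate S n = s" using enumerate_Ex[OF inf] by blast
      then show "s \<in> enumerate S ` D" unfolding D_def using \<open>s \<in> _\<close> by auto
    qed
  qed
  have cD: "card D = card {s\<in>S. s \<le> B}"
    using img inj_enumerate[OF inf] by (metis card_image inj_on_subset subset_UNIV)
  have ex: "\<exists>n. n \<notin> D" using fD by (meson ex_new_if_finite infinite_UNIV_nat)
  define m where "m = (LEAST n. n \<notin> D)"
  have mnot: "m \<notin> D" unfolding m_def using ex by (metis LeastI)
  have Deq: "D = {..<m}"
  proof
    show "{..<m} \<subseteq> D" unfolding m_def using not_less_Least by blast
    show "D \<subseteq> {..<m}"
    proof
      fix n assume n: "n \<in> D"
      show "n \<in> {..<m}"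
      proof (rule ccontr)
        assume "n \<notin> {..<m}"
        then have "m \<le> n" by auto
        then have "enumerate S m \<le> enumerate S n" using inf by simp
        then have "m \<in> D" using n unfolding D_def by auto
        then show False using mnot by blast
      qed
    qed
  qed
  have "0 \<in> D" unfolding D_def using z by (simp add: enumerate_0 Least_equality)
  then have m1: "1 \<le> m" using Deq by auto
  have eqi: "(1 \<le> i \<and> enumerate S (i - 1) \<le> B) \<longleftrightarrow> (1 \<le> i \<and> i \<le> m)" for i
  proof -
    have "enumerate S (i - 1) \<le> B \<longleftrightarrow> i - 1 \<in> D" unfolding D_def by simp
    also have "\<dots> \<longleftrightarrow> i - 1 < m" unfolding Deq by simp
    finally show ?thesis by (cases i) auto
  qed
  have "{i. 1 \<le> i \<and> enumerate S (i - 1) \<le> B} = {1..m}"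
    unfolding eqi by auto
  moreover have "Max {1..m} = m" using m1 by (intro Max_eqI) auto
  ultimately have "Max {i. 1 \<le> i \<and> enumerate S (i - 1) \<le> B} = m" by simp
  moreover have "card D = m" using Deq by simp
  ultimately show ?thesis using cD by simp
qed

lemma GS_inf: "infinite (GS r)"
proof -
  have "range (\<lambda>j::nat. j * (r + 1)) \<subseteq> GS r"
  proof
    fix x assume "x \<in> range (\<lambda>j::nat. j * (r + 1))"
    then obtain j where "x = 0 * r + j * (r + 1)" by auto
    then show "x \<in> GS r" unfolding GS_def by blast
  qed
  moreover have "inj (\<lambda>j::nat. j * (r + 1))" by (rule injI) (metis add_is_0 mult_cancel2 one_neq_zero)
  ultimately show ?thesis by (meson infinite_super range_inj_infinite)
qed

lemma GS_0: "0 \<in> GS r" unfolding GS_def by force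

lemma GS_iff: "s \<in> GS r \<longleftrightarrow> (\<exists>k j. j \<le> k \<and> s = k * r + j)"
proof
  assume "s \<in> GS r"
  then obtain i j where "s = i * r + j * (r + 1)" unfolding GS_def by auto
  then have "s = (i + j) * r + j" by (simp add: algebra_simps)
  then show "\<exists>k j. j \<le> k \<and> s = k * r + j" by (intro exI[of _ "i+j"] exI[of _ j]) auto
next
  assume "\<exists>k j. j \<le> k \<and> s = k * r + j"
  then obtain k j where "j \<le> k" "s = k * r + j" by auto
  then have "s = (k - j) * r + j * (r + 1)" by (simp add: algebra_simps diff_mult_distrib)
  then show "s \<in> GS r" unfolding GS_def by auto
qed

lemma ell_card: "ell_tilde r b = card {s\<in>GS r. int s \<le> b}"
proof (cases "b < 0")
  case True then show ?thesis unfolding ell_tilde_def by auto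
next
  case False
  then obtain B where B: "b = int B" by (metis nonneg_int_cases not_less)
  have "ell_tilde r b = Max {i. 1 \<le> i \<and> enumerate (GS r) (i - 1) \<le> B}"
    unfolding ell_tilde_def gamma_def using False B by simp
  also have "\<dots> = card {s\<in>GS r. s \<le> B}" by (rule enum_count[OF GS_inf GS_0])
  finally show ?thesis using B by simp
qed

lemma fin_le: "finite {s\<in>GS r. int s \<le> b}"
  by (rule finite_subset[of _ "{..nat b}"]) auto

lemma ell_split:
  assumes "x \<le> y"
  shows "ell_tilde r y = ell_tilde r x + card {s\<in>GS r. x < int s \<and> int s \<le> y}"
proof -
  have "{s\<in>GS r. int s \<le> y} = {s\<in>GS r. int s \<le> x} \<union> {s\<in>GS r. x < int s \<and> int s \<le> y}"
    using assms by auto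
  moreover have "finite {s\<in>GS r. x < int s \<and> int s \<le> y}"
    by (rule finite_subset[OF _ fin_le[of r y]]) auto
  ultimately show ?thesis unfolding ell_card using fin_le[of r x]
    by (simp add: card_Un_disjoint disjoint_iff)
qed

theorem lemma3p14:
  fixes r \<alpha> \<beta> :: nat and g N a :: int
  assumes "g = int (r * (r - 1) div 2)"
    and "-1 \<le> N" and "N \<le> 2 * g - 2"
    and "a = int (\<alpha> * r + \<beta>)" and "\<beta> < r" and "1 \<le> \<alpha>"
    and "is_gap r a" and "2 * a \<le> N"
  shows "ell_tilde r a + ell_tilde r (N - a)
           \<le> ell_tilde r (a - int r) + ell_tilde r (N - (a - int r))"
proof -
  have ab: "\<alpha> < \<beta>"
  proof (rule ccontr)
    assume "\<not> \<alpha> < \<beta>"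
    then have "\<alpha> * r + \<beta> \<in> GS r" unfolding GS_iff by (intro exI[of _ \<alpha>] exI[of _ \<beta>]) auto
    then have "int (\<alpha> * r + \<beta>) \<in> int ` GS r" by (rule imageI)
    then show False using assms(4,7) unfolding is_gap_def by blast
  qed
  define C1 where "C1 = {s\<in>GS r. a - int r < int s \<and> int s \<le> a}"
  define C2 where "C2 = {s\<in>GS r. N - a < int s \<and> int s \<le> N - (a - int r)}"
  have up: "C1 \<subseteq> (\<lambda>j. \<alpha> * r + j) ` {..\<alpha>}"
  proof
    fix s assume "s \<in> C1"
    then have sG: "s \<in> GS r" and slo: "a - int r < int s" and shi: "int s \<le> a" unfolding C1_def by auto
    obtain k j where kj: "j \<le> k" "s = k * r + j" using sG unfolding GS_iff by blast
    have hi: "s \<le> \<alpha> * r + \<beta>" using shi assms(4) by (metis of_nat_le_iff)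
    obtain \<alpha>' where a': "\<alpha> = Suc \<alpha>'" using assms(6) by (cases \<alpha>) auto
    have hA: "a = int (\<alpha>' * r + \<beta>) + int r" using assms(4) a' by simp
    have "int (\<alpha>' * r + \<beta>) < int s" using slo hA by linarith
    then have lo: "(\<alpha> - 1) * r + \<beta> < s" using a' by (metis diff_Suc_1 of_nat_less_iff)
    have "k * r < (\<alpha> + 1) * r" using kj hi assms(5) by simp
    then have "k < \<alpha> + 1" using mult_less_cancel2 by blast
    then have k1: "k \<le> \<alpha>" by simp
    have k2: "\<not> k \<le> \<alpha> - 1"
    proof
      assume "k \<le> \<alpha> - 1"
      then have "k * r \<le> (\<alpha> - 1) * r" by simp
      moreover have "j \<le> \<beta>" using kj \<open>k \<le> \<alpha> - 1\<close> ab by simp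
      ultimately show False using kj lo by linarith
    qed
    have "k = \<alpha>" using k1 k2 by simp
    then show "s \<in> (\<lambda>j. \<alpha> * r + j) ` {..\<alpha>}" using kj by auto
  qed
  have c1: "card C1 \<le> \<alpha> + 1"
    using card_mono[OF _ up] card_image_le[of "{..\<alpha>}" "\<lambda>j. \<alpha> * r + j"] by simp
  define X where "X = nat (N - a + int r)"
  have a0: "0 \<le> a" using assms(4) by simp
  have "0 \<le> N - a + int r" using a0 assms(8) by linarith
  then have XN: "int X = N - a + int r" unfolding X_def by simp
  define k where "k = X div r"
  define b' where "b' = X mod r"
  have r0: "0 < r" using assms(5) by simp
  have Xk: "X = k * r + b'" unfolding k_def b'_def by simp
  have b'r: "b' < r" unfolding b'_def using r0 by simp
  have "int ((\<alpha> + 1) * r + \<beta>) = a + int r" using assms(4) by (simp add: algebra_simps)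
  then have "int ((\<alpha> + 1) * r + \<beta>) \<le> int X" using XN assms(8) by linarith
  then have "(\<alpha> + 1) * r + \<beta> \<le> X" by (simp only: of_nat_le_iff)
  moreover have "(k + 1) * r = k * r + r" by simp
  ultimately have "(\<alpha> + 1) * r < (k + 1) * r" using Xk b'r by linarith
  then have "\<alpha> + 1 < k + 1" using mult_less_cancel2 by blast
  then have kge: "\<alpha> + 1 \<le> k" by simp
  define h where "h = (\<lambda>\<rho>. if \<rho> \<le> b' then k * r + \<rho> else (k - 1) * r + \<rho>)"
  have hsub: "h ` {..\<alpha>} \<subseteq> C2"
  proof
    fix s assume "s \<in> h ` {..\<alpha>}"
    then obtain \<rho> where \<rho>: "\<rho> \<le> \<alpha>" "s = h \<rho>" by auto
    have \<rho>r: "\<rho> < r" using \<rho> ab assms(5) by simp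
    obtain k' where kk: "k = Suc k'" using kge by (cases k) auto
    have Xi: "int X = int (k' * r) + int r + int b'" using Xk kk by simp
    have NX: "N - (a - int r) = int X" "N - a = int X - int r" using XN by auto
    show "s \<in> C2"
    proof (cases "\<rho> \<le> b'")
      case True
      then have sk: "s = k * r + \<rho>" using \<rho> h_def by simp
      moreover have "\<rho> \<le> k" using \<rho> kge by simp
      ultimately have sG: "s \<in> GS r" unfolding GS_iff by auto
      have si: "int s = int (k' * r) + int r + int \<rho>" using sk kk by simp
      have "N - a < int s" "int s \<le> N - (a - int r)" using si Xi NX True b'r by linarith+
      then show ?thesis unfolding C2_def using sG by blast
    next
      case False
      then have sk: "s = k' * r + \<rho>" using \<rho> h_def kk by simp
      moreover have "\<rho> \<le> k'" using \<rho> kge kk by simp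
      ultimately have sG: "s \<in> GS r" unfolding GS_iff by auto
      have si: "int s = int (k' * r) + int \<rho>" using sk by simp
      have "N - a < int s" "int s \<le> N - (a - int r)" using si Xi NX False \<rho>r by linarith+
      then show ?thesis unfolding C2_def using sG by blast
    qed
  qed
  have hmod: "h \<rho> mod r = \<rho>" if "\<rho> < r" for \<rho> using that unfolding h_def by auto
  have "inj_on h {..\<alpha>}"
  proof
    fix x y assume "x \<in> {..\<alpha>}" "y \<in> {..\<alpha>}" "h x = h y"
    then have "x < r" "y < r" using ab assms(5) by auto
    then show "x = y" using hmod \<open>h x = h y\<close> by metis
  qed
  then have "card (h ` {..\<alpha>}) = \<alpha> + 1" by (simp add: card_image)
  moreover have "finite C2" unfolding C2_def by (rule finite_subset[OF _ fin_le[of r "N - (a - int r)"]]) auto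
  ultimately have c2: "\<alpha> + 1 \<le> card C2" using card_mono[OF _ hsub] by simp
  have e1: "ell_tilde r a = ell_tilde r (a - int r) + card C1"
    unfolding C1_def by (rule ell_split) simp
  have e2: "ell_tilde r (N - (a - int r)) = ell_tilde r (N - a) + card C2"
    unfolding C2_def by (rule ell_split) simp
  show ?thesis using e1 e2 c1 c2 by simp
qed

end
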